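(* Let $n>1$ and $P(x)=a_nx^n+a_{n-1}x^{n-1}+\cdots+a_1x$ with integer coefficients $a_i\ge 0$, $a_n\neq 0$, and $\gcd(a_n,\dots,a_1)=1$. Let $(a,b)\in\mathbb{N}^2$. If $\gcd_P(a,b)=1$, then $(a,b)$ is $\mathcal{F}(a_n,\dots,a_1)$-visible.
   Context: $\mathbb{N}$ denotes the positive integers. For $(a,b)\in\mathbb{N}^2$, $\gcd_P(a,b)=\max\{d\in\mathbb{N}: d\mid P(a),\ d\mid b\}$. The family $\mathcal{F}(a_n,\dots,a_1)=\{y=q(a_nx^n+\cdots+a_1x): q\in\mathbb{Q}^+\}$. A point $(r,s)\in\mathbb{N}^2$ is $\mathcal{F}(a_n,\dots,a_1)$-visible if there is $q\in\mathbb{Q}^+$ with $s=q(a_nr^n+\cdots+a_1r)$ and no other point of $\mathbb{N}^2$ lies on the curve $y=q(a_nx^n+\cdots+a_1x)$ between the origin and $(r,s)$. *)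

theory Defs
  imports "HOL-Computational_Algebra.Computational_Algebra"
begin

definition gcdP :: "int poly \<Rightarrow> nat \<Rightarrow> nat \<Rightarrow> nat" where
  "gcdP P a b = Max {d::nat. d > 0 \<and> int d dvd poly P (int a) \<and> d dvd b}"

text \<open>(r,s) in N^2 is F(P)-visible: some curve y = q P(x), q positive rational, passes
  through (r,s) and no other point of N^2 lies on it strictly between the origin and (r,s),
  i.e. with first coordinate 0 < x < r.\<close>
definition F_visible :: "int poly \<Rightarrow> nat \<Rightarrow> nat \<Rightarrow> bool" where
  "F_visible P r s \<longleftrightarrow> r > 0 \<and> s > 0 \<and>
     (\<exists>q::rat. q > 0 \<and> of_nat s = q * of_int (poly P (int r)) \<and>
        \<not> (\<exists>x y::nat. 0 < x \<and> x < r \<and> 0 < y \<and> of_nat y = q * of_int (poly P (int x))))"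

end

theory Submission
  imports Defs
begin

lemma polyP_mono:
  fixes P :: "int poly"
  assumes nn: "\<forall>i. coeff P i \<ge> 0" and d: "degree P \<ge> 1" and lc: "lead_coeff P > 0"
    and x: "0 \<le> x" and xy: "x < y"
  shows "poly P x < poly P y" and "0 < x \<Longrightarrow> 0 < poly P x"
proof -
  have A: "poly P z = (\<Sum>i\<le>degree P. coeff P i * z ^ i)" for z by (simp add: poly_altdef)
  have le: "coeff P i * x ^ i \<le> coeff P i * y ^ i" for i
    using nn x xy by (intro mult_left_mono power_mono) auto
  have lt: "coeff P (degree P) * x ^ degree P < coeff P (degree P) * y ^ degree P"
    using lc x xy d by (intro mult_strict_left_mono power_strict_mono) auto
  show "poly P x < poly P y" unfolding A
    by (rule sum_strict_mono_ex1) (use le lt in auto)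
  assume "0 < x"
  have ge: "0 \<le> coeff P i * x ^ i" for i using nn x by simp
  have "0 < coeff P (degree P) * x ^ degree P" using lc \<open>0 < x\<close> by simp
  then show "0 < poly P x" unfolding A
    using sum_strict_mono_ex1[of "{..degree P}" "\<lambda>_. 0" "\<lambda>i. coeff P i * x ^ i"] ge by auto
qed

theorem lemma3p2:
  fixes P :: "int poly" and a b :: nat
  assumes "degree P > 1"
    and "coeff P 0 = 0"
    and "\<forall>i. coeff P i \<ge> 0"
    and "content P = 1"
    and "a > 0" and "b > 0"
    and "gcdP P a b = 1"
  shows "F_visible P a b"
proof -
  have P0: "P \<noteq> 0" using assms(1) by auto
  have lc: "lead_coeff P > 0" using P0 assms(3)
    by (metis leading_coeff_0_iff order_le_less)
  have d1: "degree P \<ge> 1" using assms(1) by simp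
  have Pa: "poly P (int a) > 0"
    using polyP_mono(2)[OF assms(3) d1 lc, of "int a" "int a + 1"] assms(5) by simp
  define g where "g = gcd (nat (poly P (int a))) b"
  have gpos: "g > 0" unfolding g_def using assms(6) by simp
  have gd1: "int g dvd poly P (int a)"
  proof -
    have "int g dvd int (nat (poly P (int a)))" unfolding g_def int_dvd_int_iff by (rule gcd_dvd1)
    then show ?thesis using Pa by simp
  qed
  have gd2: "g dvd b" unfolding g_def by simp
  have fin: "finite {d::nat. d > 0 \<and> int d dvd poly P (int a) \<and> d dvd b}"
    by (rule finite_subset[of _ "{..b}"]) (use assms(6) in \<open>auto dest: dvd_imp_le\<close>)
  have "g \<le> gcdP P a b" unfolding gcdP_def
    by (rule Max_ge[OF fin]) (use gpos gd1 gd2 in auto)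
  then have g1: "g = 1" using gpos assms(7) by simp
  have cop: "coprime (poly P (int a)) (int b)"
  proof -
    have "coprime (nat (poly P (int a))) b" using g1 unfolding g_def by (simp add: coprime_iff_gcd_eq_1)
    then have "coprime (int (nat (poly P (int a)))) (int b)" by (simp only: coprime_int_iff)
    then show ?thesis using Pa by simp
  qed
  define q :: rat where "q = of_nat b / of_int (poly P (int a))"
  have qpos: "q > 0" unfolding q_def using Pa assms(6) by simp
  have qs: "of_nat b = q * of_int (poly P (int a))" unfolding q_def using Pa by simp
  have nox: "\<not> (\<exists>x y::nat. 0 < x \<and> x < a \<and> 0 < y \<and> of_nat y = q * of_int (poly P (int x)))"
  proof
    assume "\<exists>x y::nat. 0 < x \<and> x < a \<and> 0 < y \<and> of_nat y = q * of_int (poly P (int x))"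
    then obtain x y :: nat where xy: "0 < x" "x < a" "of_nat y = q * of_int (poly P (int x))" by blast
    have "(of_nat y :: rat) * of_int (poly P (int a)) = of_nat b * of_int (poly P (int x))"
      using xy(3) Pa unfolding q_def by (simp add: field_simps)
    then have eq: "int y * poly P (int a) = int b * poly P (int x)"
      by (metis (mono_tags) of_int_eq_iff of_int_mult of_int_of_nat_eq)
    then have "poly P (int a) dvd int b * poly P (int x)" by (metis dvd_triv_right)
    then have dv: "poly P (int a) dvd poly P (int x)" using cop by (simp add: coprime_dvd_mult_right_iff)
    have px: "0 < poly P (int x)" using polyP_mono(2)[OF assms(3) d1 lc, of "int x" "int a"] xy by simp
    have "poly P (int x) < poly P (int a)" using polyP_mono(1)[OF assms(3) d1 lc, of "int x" "int a"] xy by simp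
    moreover have "poly P (int a) \<le> poly P (int x)" using zdvd_imp_le[OF dv px] .
    ultimately show False by linarith
  qed
  show ?thesis unfolding F_visible_def using assms(5,6) qpos qs nox by blast
qed

end
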